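(* Let $u(t)=\sum_{i=1}^M s_i(t)e^{j2\pi f_it}$ be a signal in the class $\mathcal{M}_2$ described in the context, and consider an L-shaped array with $2N-1$ sensors ($N$ along each axis, with a common sensor at the origin) and distance $d$ between adjacent sensors. Let $\alpha_i=f_i\cos\theta_i$, $\beta_i=f_i\sin\theta_i$, and suppose they lie on the grid $\{\delta l\}_{l=-L_0}^{L_0}$ with $L_0=\frac{f_{\text{Nyq}}}{2\delta}$; set $L=2L_0+1$. Let $\mathbf{G}\in\mathbb{C}^{(2N-1)\times L^2}$ have entries, for $l=0,\dots,L^2-1$ with $l_1=(l\bmod L)-L_0$ and $l_2=\lfloor l/L\rfloor-L_0$: $G_{n,l}=e^{j2\pi\frac{dn}{c}\delta l_1}$ for $0\le n\le N-1$ and $G_{n,l}=e^{j2\pi\frac{d(n-N+1)}{c}\delta l_2}$ for $N\le n\le 2N-2$. Let $\mathbf{R}=\mathbf{G}\mathbf{R}_w^g\mathbf{G}^H$, where $\mathbf{R}_w^g$ is the $L^2\times L^2$ diagonal matrix whose only nonzero entries are $\mathbb{E}[|w_i|^2]$ at the $M$ indices corresponding to the pairs $(\alpha_i,\beta_i)$, and let $\mathbf{r}_w^g$ be the diagonal of $\mathbf{R}_w^g$, so that $\mathrm{vec}(\mathbf{R})=(\bar{\mathbf{G}}\odot\mathbf{G})\mathbf{r}_w^g$. If (c1) $d<\frac{c}{f_{\text{Nyq}}}$, (c2) $N>M$, and (c3) $\mathrm{spark}(\mathbf{G})=N+1$, then the equation $\mathrm{vec}(\mathbf{R})=(\bar{\mathbf{G}}\odot\mathbf{G})\mathbf{r}$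 has a unique $M$-sparse solution $\mathbf{r}=\mathbf{r}_w^g$.
   Context: Class $\mathcal{M}_2$: $u$ is complex valued with Fourier transform supported in $[-f_{\text{Nyq}}/2,f_{\text{Nyq}}/2]$, each $s_i$ has Fourier transform supported in $[-B/2,B/2]$, $\min_{i\neq j}|f_i-f_j|>B$; the $s_i$ are wide-sense stationary, zero mean, mutually uncorrelated with nonzero variances; transmission $i$ has unknown angle of arrival $\theta_i$ in the $xz$-plane, $|\theta_i|<90^\circ$, and $f_i\cos\theta_i$ (resp. $f_i\sin\theta_i$) are pairwise distinct. $c>0$ is the propagation speed. Each sensor multiplies by a common periodic function $p(t)$, low-pass filters and samples; $w_i[k]$ denotes the resulting baseband samples of transmission $i$, and the stacked sample vector $\mathbf{v}$ of both axes has correlation $\mathbb{E}[\mathbf{v}\mathbf{v}^H]=\mathbf{R}$. $\mathrm{vec}(\cdot)$ stacks columns, $\bar{\mathbf{G}}$ is the entrywise complex conjugate, $\odot$ is the Khatri–Rao (column-wise Kronecker) product, and $\mathrm{spark}$ is the smallest number of linearly dependent columns. A vector is $M$-sparse if it has at most $M$ nonzero entries. *)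

theory Defs
  imports Complex_Main "HOL-Library.Extended_Nat"
begin

text \<open>Matrices and vectors are represented as functions on natural-number
indices (0-based); dimensions are carried explicitly.\<close>

definition mat_mult :: "nat \<Rightarrow> (nat \<Rightarrow> nat \<Rightarrow> complex) \<Rightarrow> (nat \<Rightarrow> nat \<Rightarrow> complex) \<Rightarrow> nat \<Rightarrow> nat \<Rightarrow> complex" where
  "mat_mult inner A B i k = (\<Sum>j<inner. A i j * B j k)"

definition mat_vec :: "nat \<Rightarrow> (nat \<Rightarrow> nat \<Rightarrow> complex) \<Rightarrow> (nat \<Rightarrow> complex) \<Rightarrow> nat \<Rightarrow> complex" where
  "mat_vec inner A x i = (\<Sum>j<inner. A i j * x j)"

definition adjoint_mat :: "(nat \<Rightarrow> nat \<Rightarrow> complex) \<Rightarrow> nat \<Rightarrow> nat \<Rightarrow> complex" where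
  "adjoint_mat A i j = cnj (A j i)"

definition conj_mat :: "(nat \<Rightarrow> nat \<Rightarrow> complex) \<Rightarrow> nat \<Rightarrow> nat \<Rightarrow> complex" where
  "conj_mat A i j = cnj (A i j)"

definition diag_mat :: "(nat \<Rightarrow> complex) \<Rightarrow> nat \<Rightarrow> nat \<Rightarrow> complex" where
  "diag_mat v i j = (if i = j then v i else 0)"

definition vec_mat :: "nat \<Rightarrow> (nat \<Rightarrow> nat \<Rightarrow> complex) \<Rightarrow> nat \<Rightarrow> complex" where
  "vec_mat nr A i = A (i mod nr) (i div nr)"

text \<open>Khatri--Rao (column-wise Kronecker) product; \<open>nrB\<close> is the number of rows of B.
  Column l is (column l of A) \<otimes> (column l of B).\<close>
definition khatri_rao :: "nat \<Rightarrow> (nat \<Rightarrow> nat \<Rightarrow> complex) \<Rightarrow> (nat \<Rightarrow> nat \<Rightarrow> complex) \<Rightarrow> nat \<Rightarrow> nat \<Rightarrow> complex" where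
  "khatri_rao nrB A B i l = A (i div nrB) l * B (i mod nrB) l"

definition cols_dependent :: "(nat \<Rightarrow> nat \<Rightarrow> complex) \<Rightarrow> nat \<Rightarrow> nat set \<Rightarrow> bool" where
  "cols_dependent A nr S \<longleftrightarrow>
     (\<exists>x::nat \<Rightarrow> complex. (\<exists>j\<in>S. x j \<noteq> 0) \<and> (\<forall>n<nr. (\<Sum>j\<in>S. A n j * x j) = 0))"

definition spark :: "(nat \<Rightarrow> nat \<Rightarrow> complex) \<Rightarrow> nat \<Rightarrow> nat \<Rightarrow> enat" where
  "spark A nr nc =
     (if \<exists>S. S \<subseteq> {..<nc} \<and> cols_dependent A nr S
      then enat (LEAST k. \<exists>S. S \<subseteq> {..<nc} \<and> card S = k \<and> cols_dependent A nr S)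
      else \<infinity>)"

definition sparse :: "nat \<Rightarrow> (nat \<Rightarrow> complex) \<Rightarrow> bool" where
  "sparse M x \<longleftrightarrow> finite {j. x j \<noteq> 0} \<and> card {j. x j \<noteq> 0} \<le> M"

definition Gmat :: "nat \<Rightarrow> nat \<Rightarrow> real \<Rightarrow> real \<Rightarrow> real \<Rightarrow> nat \<Rightarrow> nat \<Rightarrow> complex" where
  "Gmat N L0 d c \<delta> n l =
     (let L = 2 * L0 + 1;
          l1 = int (l mod L) - int L0;
          l2 = int (l div L) - int L0
      in if n < N then cis (2 * pi * (d * real n / c) * \<delta> * of_int l1)
         else cis (2 * pi * (d * (real n - real N + 1) / c) * \<delta> * of_int l2))"

end

theory Submission
  imports Defs
begin

definition ip :: "nat \<Rightarrow> (nat \<Rightarrow> complex) \<Rightarrow> (nat \<Rightarrow> complex) \<Rightarrow> complex" where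
  "ip n u v = (\<Sum>i<n. u i * cnj (v i))"

lemma ip_diff_left: "ip n (\<lambda>i. u i - c * v i) y = ip n u y - c * ip n v y"
  by (simp add: ip_def algebra_simps sum_subtractf sum_distrib_left)

lemma ip_diff_right: "ip n u (\<lambda>i. v i - w i) = ip n u v - ip n u w"
  by (simp add: ip_def algebra_simps sum_subtractf)

lemma ip_cong_right: "(\<And>i. i < n \<Longrightarrow> v i = w i) \<Longrightarrow> ip n u v = ip n u w"
  by (simp add: ip_def)

lemma ip_lin_right:
  "ip n u (\<lambda>i. \<Sum>j\<in>T. z j * A i j) = (\<Sum>j\<in>T. cnj (z j) * ip n u (\<lambda>i. A i j))"
  unfolding ip_def
  by (simp add: sum_distrib_left sum_distrib_right mult_ac sum.swap[of _ T])

lemma ip_self_zero: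
  assumes "ip n u u = 0" "i < n" shows "u i = 0"
proof -
  have "ip n u u = complex_of_real (\<Sum>i<n. (cmod (u i))^2)"
    by (simp add: ip_def complex_mult_cnj cmod_def)
  hence "(\<Sum>i<n. (cmod (u i))^2) = 0" using assms(1) by (metis of_real_eq_0_iff)
  hence "\<forall>i\<in>{..<n}. (cmod (u i))^2 = 0" by (subst (asm) sum_nonneg_eq_0_iff) auto
  thus ?thesis using assms(2) by simp
qed

lemma proj:
  assumes "finite T"
  shows "\<exists>z. \<forall>l\<in>T. ip n (\<lambda>i. w i - (\<Sum>j\<in>T. z j * A i j)) (\<lambda>i. A i l) = 0"
  using assms
proof (induction T arbitrary: w rule: finite_induct)
  case empty
  then show ?case by simp
next
  case (insert v T)
  obtain z1 where z1: "\<forall>l\<in>T. ip n (\<lambda>i. w i - (\<Sum>j\<in>T. z1 j * A i j)) (\<lambda>i. A i l) = 0"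
    using insert.IH by blast
  obtain z2 where z2: "\<forall>l\<in>T. ip n (\<lambda>i. A i v - (\<Sum>j\<in>T. z2 j * A i j)) (\<lambda>i. A i l) = 0"
    using insert.IH[of "\<lambda>i. A i v"] by blast
  define r1 where "r1 = (\<lambda>i. w i - (\<Sum>j\<in>T. z1 j * A i j))"
  define e where "e = (\<lambda>i. A i v - (\<Sum>j\<in>T. z2 j * A i j))"
  have r1T: "\<forall>l\<in>T. ip n r1 (\<lambda>i. A i l) = 0" using z1 r1_def by simp
  have eT: "\<forall>l\<in>T. ip n e (\<lambda>i. A i l) = 0" using z2 e_def by simp
  have sumz: "\<And>z u. (\<forall>l\<in>T. ip n u (\<lambda>i. A i l) = 0) \<Longrightarrow> ip n u (\<lambda>i. \<Sum>j\<in>T. z j * A i j) = 0"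
    by (simp add: ip_lin_right)
  have Av: "\<And>u. ip n u (\<lambda>i. A i v) = ip n u e + ip n u (\<lambda>i. \<Sum>j\<in>T. z2 j * A i j)"
    unfolding e_def by (simp add: ip_diff_right)
  show ?case
  proof (cases "ip n e e = 0")
    case True
    have e0: "\<And>i. i < n \<Longrightarrow> e i = 0" using ip_self_zero[OF True] by blast
    have "ip n r1 e = 0" by (simp add: ip_def e0)
    hence rv: "ip n r1 (\<lambda>i. A i v) = 0" using Av[of r1] sumz[OF r1T] by simp
    define z where "z = z1(v := 0)"
    have "(\<Sum>j\<in>insert v T. z j * A i j) = (\<Sum>j\<in>T. z1 j * A i j)" for i
    proof -
      have "(\<Sum>j\<in>insert v T. z j * A i j) = z v * A i v + (\<Sum>j\<in>T. z j * A i j)"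
        using insert.hyps by (rule sum.insert)
      also have "(\<Sum>j\<in>T. z j * A i j) = (\<Sum>j\<in>T. z1 j * A i j)"
        by (rule sum.cong) (use insert.hyps in \<open>auto simp: z_def\<close>)
      finally show ?thesis by (simp add: z_def)
    qed
    hence "(\<lambda>i. w i - (\<Sum>j\<in>insert v T. z j * A i j)) = r1" unfolding r1_def by simp
    thus ?thesis using rv r1T by (intro exI[of _ z]) auto
  next
    case False
    define c where "c = ip n r1 e / ip n e e"
    define z where "z = (\<lambda>j. z1 j - c * z2 j)(v := c)"
    have s1: "(\<Sum>j\<in>insert v T. z j * A i j) = c * A i v + (\<Sum>j\<in>T. (z1 j - c * z2 j) * A i j)" for i
    proof -
      have "(\<Sum>j\<in>insert v T. z j * A i j) = z v * A i v + (\<Sum>j\<in>T. z j * A i j)"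
        using insert.hyps by (rule sum.insert)
      also have "(\<Sum>j\<in>T. z j * A i j) = (\<Sum>j\<in>T. (z1 j - c * z2 j) * A i j)"
        by (rule sum.cong) (use insert.hyps in \<open>auto simp: z_def\<close>)
      finally show ?thesis by (simp add: z_def)
    qed
    have s2: "(\<Sum>j\<in>T. (z1 j - c * z2 j) * A i j) = (\<Sum>j\<in>T. z1 j * A i j) - c * (\<Sum>j\<in>T. z2 j * A i j)" for i
      by (simp add: sum_distrib_left left_diff_distrib sum_subtractf mult.assoc)
    have eqn: "(\<lambda>i. w i - (\<Sum>j\<in>insert v T. z j * A i j)) = (\<lambda>i. r1 i - c * e i)"
    proof
      fix i show "w i - (\<Sum>j\<in>insert v T. z j * A i j) = r1 i - c * e i"
        unfolding s1 s2 r1_def e_def by (simp add: right_diff_distrib)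
    qed
    have newT: "\<forall>l\<in>T. ip n (\<lambda>i. r1 i - c * e i) (\<lambda>i. A i l) = 0"
      using r1T eT by (simp add: ip_diff_left)
    have "ip n (\<lambda>i. r1 i - c * e i) e = 0"
      using False unfolding ip_diff_left c_def by simp
    hence "ip n (\<lambda>i. r1 i - c * e i) (\<lambda>i. A i v) = 0"
      using Av sumz[OF newT] by simp
    thus ?thesis using newT eqn by (intro exI[of _ z]) auto
  qed
qed

lemma spark_indep:
  assumes "spark A nr nc = enat (K + 1)" "S \<subseteq> {..<nc}" "card S \<le> K"
  shows "\<not> cols_dependent A nr S"
proof
  assume dep: "cols_dependent A nr S"
  hence ex: "\<exists>S. S \<subseteq> {..<nc} \<and> cols_dependent A nr S" using assms(2) by blast
  hence "(LEAST k. \<exists>S. S \<subseteq> {..<nc} \<and> card S = k \<and> cols_dependent A nr S) = K + 1"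
    using assms(1) unfolding spark_def by simp
  moreover have "(LEAST k. \<exists>S. S \<subseteq> {..<nc} \<and> card S = k \<and> cols_dependent A nr S) \<le> card S"
    by (rule Least_le) (use dep assms(2) in blast)
  ultimately show False using assms(3) by simp
qed

lemma key:
  fixes A :: "nat \<Rightarrow> nat \<Rightarrow> complex"
  assumes sp: "\<And>S. S \<subseteq> {..<nc} \<Longrightarrow> card S \<le> N \<Longrightarrow> \<not> cols_dependent A n S"
    and Ssub: "S \<subseteq> {..<nc}" and Scard: "card S + 2 \<le> 2 * N"
    and eq: "\<forall>p<n. \<forall>q<n. (\<Sum>l\<in>S. x l * A p l * cnj (A q l)) = 0"
    and k: "k \<in> S"
  shows "x k = 0"
proof (rule ccontr)
  assume xk: "x k \<noteq> 0"
  have finS: "finite S" using Ssub finite_subset by blast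
  have cSk: "card (S - {k}) = card S - 1" using k finS by simp
  obtain S2 where S2: "S2 \<subseteq> S - {k}" "card S2 = min (N - 1) (card S - 1)" "finite S2"
    using obtain_subset_with_card_n[of "min (N - 1) (card S - 1)" "S - {k}"] cSk by auto
  define S1 where "S1 = S - S2"
  have S2S: "S2 \<subseteq> S" using S2 by blast
  have cS1: "card S1 = card S - card S2" unfolding S1_def by (rule card_Diff_subset[OF S2(3) S2S])
  have "0 < card S" unfolding card_gt_0_iff using k finS by blast
  hence Spos: "card S \<ge> 1" by simp
  have cS1N: "card S1 \<le> N" using cS1 S2(2) Scard Spos by linarith
  have kS1: "k \<in> S1" using k S2 unfolding S1_def by blast
  have "\<exists>z. \<forall>l\<in>S2. ip n (\<lambda>i. A i k - (\<Sum>j\<in>S2. z j * A i j)) (\<lambda>i. A i l) = 0"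
    by (rule proj[OF S2(3)])
  then obtain z where hz: "\<forall>l\<in>S2. ip n (\<lambda>i. A i k - (\<Sum>j\<in>S2. z j * A i j)) (\<lambda>i. A i l) = 0"
    by blast
  define y where "y = (\<lambda>i. A i k - (\<Sum>j\<in>S2. z j * A i j))"
  have hy: "\<forall>l\<in>S2. ip n y (\<lambda>i. A i l) = 0" using hz unfolding y_def .
  have step: "(\<Sum>l\<in>S. x l * ip n y (\<lambda>i. A i l) * A p l) = 0" if p: "p < n" for p
  proof -
    have "(\<Sum>l\<in>S. x l * ip n y (\<lambda>i. A i l) * A p l)
        = (\<Sum>q<n. y q * (\<Sum>l\<in>S. x l * A p l * cnj (A q l)))"
      unfolding ip_def by (simp add: sum_distrib_left sum_distrib_right mult_ac sum.swap[of _ S])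
    also have "\<dots> = 0" using eq p by simp
    finally show ?thesis .
  qed
  have step1: "(\<Sum>l\<in>S1. A p l * (x l * ip n y (\<lambda>i. A i l))) = 0" if p: "p < n" for p
  proof -
    have "(\<Sum>l\<in>S. x l * ip n y (\<lambda>i. A i l) * A p l)
       = (\<Sum>l\<in>S1. x l * ip n y (\<lambda>i. A i l) * A p l) + (\<Sum>l\<in>S2. x l * ip n y (\<lambda>i. A i l) * A p l)"
      unfolding S1_def using sum.subset_diff[OF S2S finS] by simp
    also have "(\<Sum>l\<in>S2. x l * ip n y (\<lambda>i. A i l) * A p l) = 0" using hy by simp
    finally show ?thesis using step[OF p] by (simp add: mult_ac)
  qed
  have "S1 \<subseteq> {..<nc}" using Ssub unfolding S1_def by blast
  hence "\<not> cols_dependent A n S1" using sp cS1N by blast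
  hence "\<forall>j\<in>S1. x j * ip n y (\<lambda>i. A i j) = 0"
  proof (rule contrapos_np)
    assume "\<not> (\<forall>j\<in>S1. x j * ip n y (\<lambda>i. A i j) = 0)"
    then obtain j where "j \<in> S1" "x j * ip n y (\<lambda>i. A i j) \<noteq> 0" by blast
    thus "cols_dependent A n S1" unfolding cols_dependent_def
      using step1 by (intro exI[of _ "\<lambda>j. x j * ip n y (\<lambda>i. A i j)"]) blast
  qed
  hence "ip n y (\<lambda>i. A i k) = 0" using kS1 xk by (metis mult_eq_0_iff)
  moreover have "ip n y (\<lambda>i. \<Sum>j\<in>S2. z j * A i j) = 0" using hy by (simp add: ip_lin_right)
  ultimately have "ip n y y = 0" unfolding y_def[symmetric] by (simp add: y_def ip_diff_right)
  hence y0: "\<And>i. i < n \<Longrightarrow> y i = 0" using ip_self_zero by blast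
  define cf where "cf = (\<lambda>j. if j = k then 1 else - z j)"
  have kS2: "k \<notin> S2" using S2 by blast
  have "\<forall>p<n. (\<Sum>j\<in>insert k S2. A p j * cf j) = 0"
  proof (intro allI impI)
    fix p assume p: "p < n"
    have "(\<Sum>j\<in>insert k S2. A p j * cf j) = A p k * cf k + (\<Sum>j\<in>S2. A p j * cf j)"
      using S2(3) kS2 by (rule sum.insert)
    also have "(\<Sum>j\<in>S2. A p j * cf j) = - (\<Sum>j\<in>S2. z j * A p j)"
      by (subst sum_negf[symmetric], rule sum.cong) (use kS2 in \<open>auto simp: cf_def\<close>)
    finally show "(\<Sum>j\<in>insert k S2. A p j * cf j) = 0" using y0[OF p] by (simp add: cf_def y_def)
  qed
  hence "cols_dependent A n (insert k S2)" unfolding cols_dependent_def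
    by (intro exI[of _ cf]) (auto simp: cf_def)
  moreover have "card (insert k S2) \<le> N" using kS2 S2 Scard by auto
  moreover have "insert k S2 \<subseteq> {..<nc}" using S2S k Ssub by blast
  ultimately show False using sp[of "insert k S2"] by blast
qed

theorem theorem5:
  fixes M N L0 :: nat and d c \<delta> fNyq B :: real
    and f \<theta> \<sigma> :: "nat \<Rightarrow> real" and a b :: "nat \<Rightarrow> int"
    and L :: nat and G :: "nat \<Rightarrow> nat \<Rightarrow> complex"
    and idx :: "nat \<Rightarrow> nat" and rw :: "nat \<Rightarrow> complex" and R :: "nat \<Rightarrow> nat \<Rightarrow> complex"
  assumes c_pos: "c > 0" and d_pos: "d > 0" and delta_pos: "\<delta> > 0"
    and B_pos: "B > 0" and fNyq_pos: "fNyq > 0"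
    and L0_def: "real L0 = fNyq / (2 * \<delta>)"
    and sep: "\<forall>i<M. \<forall>j<M. i \<noteq> j \<longrightarrow> \<bar>f i - f j\<bar> > B"
    and band: "\<forall>i<M. \<bar>f i\<bar> + B / 2 \<le> fNyq / 2"
    and angle: "\<forall>i<M. \<bar>\<theta> i\<bar> < pi / 2"
    and var_pos: "\<forall>i<M. \<sigma> i > 0"
    and grid_alpha: "\<forall>i<M. f i * cos (\<theta> i) = \<delta> * of_int (a i) \<and> \<bar>a i\<bar> \<le> int L0"
    and grid_beta: "\<forall>i<M. f i * sin (\<theta> i) = \<delta> * of_int (b i) \<and> \<bar>b i\<bar> \<le> int L0"
    and alpha_distinct: "inj_on (\<lambda>i. f i * cos (\<theta> i)) {..<M}"
    and beta_distinct: "inj_on (\<lambda>i. f i * sin (\<theta> i)) {..<M}"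
    and L_def: "L = 2 * L0 + 1"
    and G_def: "G = Gmat N L0 d c \<delta>"
    and idx_def: "idx = (\<lambda>i. nat (a i + int L0) + L * nat (b i + int L0))"
    and rw_def: "rw = (\<lambda>l. \<Sum>i<M. if idx i = l then complex_of_real (\<sigma> i) else 0)"
    and R_def: "R = mat_mult (L^2) (mat_mult (L^2) G (diag_mat rw)) (adjoint_mat G)"
    and c1: "d < c / fNyq"
    and c2: "N > M"
    and c3: "spark G (2 * N - 1) (L^2) = enat (N + 1)"
  shows "sparse M rw \<and> (\<forall>l\<ge>L^2. rw l = 0)
    \<and> (\<forall>i<(2 * N - 1)^2. vec_mat (2 * N - 1) R i
           = mat_vec (L^2) (khatri_rao (2 * N - 1) (conj_mat G) G) rw i)
    \<and> (\<forall>r. (\<forall>l\<ge>L^2. r l = 0) \<and> sparse M r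
           \<and> (\<forall>i<(2 * N - 1)^2. vec_mat (2 * N - 1) R i
                 = mat_vec (L^2) (khatri_rao (2 * N - 1) (conj_mat G) G) r i)
           \<longrightarrow> r = rw)"
proof -
  define n where "n = 2 * N - 1"
  have Npos: "N \<ge> 1" using c2 by simp
  have nL: "0 < n" using Npos unfolding n_def by simp
  have spk: "\<And>S. S \<subseteq> {..<L^2} \<Longrightarrow> card S \<le> N \<Longrightarrow> \<not> cols_dependent G n S"
    using spark_indep[of G n "L^2" N] c3 unfolding n_def by blast
  have idx_lt: "idx i < L^2" if i: "i < M" for i
  proof -
    have a1: "nat (a i + int L0) \<le> 2 * L0" and b1: "nat (b i + int L0) \<le> 2 * L0"
      using grid_alpha grid_beta i by auto
    have "idx i \<le> 2 * L0 + L * (2 * L0)" unfolding idx_def using a1 b1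
      by (simp add: add_mono)
    also have "\<dots> < L^2" unfolding L_def power2_eq_square by (simp add: algebra_simps)
    finally show ?thesis .
  qed
  have supp: "{j. rw j \<noteq> 0} \<subseteq> idx ` {..<M}"
  proof
    fix j assume "j \<in> {j. rw j \<noteq> 0}"
    hence "rw j \<noteq> 0" by simp
    have "\<exists>i<M. idx i = j"
    proof (rule ccontr)
      assume "\<not> (\<exists>i<M. idx i = j)"
      hence "rw j = 0" unfolding rw_def by (intro sum.neutral) auto
      thus False using \<open>rw j \<noteq> 0\<close> by simp
    qed
    thus "j \<in> idx ` {..<M}" by blast
  qed
  have sp_rw: "sparse M rw" unfolding sparse_def
  proof
    show "finite {j. rw j \<noteq> 0}" using supp finite_subset by blast
    have "card {j. rw j \<noteq> 0} \<le> card (idx ` {..<M})" using supp by (simp add: card_mono)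
    also have "\<dots> \<le> M" using card_image_le[of "{..<M}" idx] by simp
    finally show "card {j. rw j \<noteq> 0} \<le> M" .
  qed
  have rw0: "\<forall>l\<ge>L^2. rw l = 0"
  proof (intro allI impI)
    fix l assume "l \<ge> L^2"
    hence "l \<notin> idx ` {..<M}" using idx_lt by force
    thus "rw l = 0" using supp by blast
  qed
  have KR: "mat_vec (L^2) (khatri_rao n (conj_mat G) G) v i
      = (\<Sum>l<L^2. G (i mod n) l * v l * cnj (G (i div n) l))" for v i
    unfolding mat_vec_def khatri_rao_def conj_mat_def by (simp add: mult_ac)
  have vecR: "vec_mat n R i = (\<Sum>l<L^2. G (i mod n) l * rw l * cnj (G (i div n) l))" for i
  proof -
    have inner: "mat_mult (L^2) G (diag_mat rw) p j = G p j * rw j" if j: "j < L^2" for p j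
    proof -
      have "mat_mult (L^2) G (diag_mat rw) p j = (\<Sum>k<L^2. if k = j then G p j * rw j else 0)"
        unfolding mat_mult_def diag_mat_def by (rule sum.cong) auto
      also have "\<dots> = G p j * rw j" using j by simp
      finally show ?thesis .
    qed
    show ?thesis unfolding vec_mat_def R_def mat_mult_def[of _ _ "adjoint_mat G"] adjoint_mat_def
      by (rule sum.cong) (simp_all add: inner)
  qed
  have eq1: "\<forall>i<(2 * N - 1)^2. vec_mat (2 * N - 1) R i
           = mat_vec (L^2) (khatri_rao (2 * N - 1) (conj_mat G) G) rw i"
    unfolding n_def[symmetric] using KR vecR by simp
  have uniq: "r = rw" if r0: "\<forall>l\<ge>L^2. r l = 0" and spr: "sparse M r"
     and req: "\<forall>i<(2 * N - 1)^2. vec_mat (2 * N - 1) R i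
                 = mat_vec (L^2) (khatri_rao (2 * N - 1) (conj_mat G) G) r i" for r
  proof -
    define e where "e = (\<lambda>l. r l - rw l)"
    define S where "S = {l. e l \<noteq> 0}"
    have SL: "S \<subseteq> {..<L^2}" 
    proof
      fix x assume "x \<in> S"
      hence "r x \<noteq> rw x" unfolding S_def e_def by simp
      thus "x \<in> {..<L^2}" using r0 rw0 by (metis lessThan_iff not_le)
    qed
    have Ssub: "S \<subseteq> {j. r j \<noteq> 0} \<union> {j. rw j \<noteq> 0}" unfolding S_def e_def by auto
    have "card S \<le> card ({j. r j \<noteq> 0} \<union> {j. rw j \<noteq> 0})"
      using Ssub spr sp_rw unfolding sparse_def by (intro card_mono) auto
    also have "\<dots> \<le> card {j. r j \<noteq> 0} + card {j. rw j \<noteq> 0}" by (rule card_Un_le)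
    also have "\<dots> \<le> M + M" using spr sp_rw unfolding sparse_def by simp
    finally have cS: "card S + 2 \<le> 2 * N" using c2 by simp
    have eqS: "\<forall>p<n. \<forall>q<n. (\<Sum>l\<in>S. e l * G p l * cnj (G q l)) = 0"
    proof (intro allI impI)
      fix p q assume p: "p < n" and q: "q < n"
      define i where "i = p + n * q"
      have imod: "i mod n = p" and idiv: "i div n = q" unfolding i_def using p by auto
      have "i < n^2"
      proof -
        have "i < n + n * q" unfolding i_def using p by simp
        also have "\<dots> = n * (q + 1)" by (simp add: algebra_simps)
        also have "\<dots> \<le> n * n" using q by (intro mult_left_mono) auto
        finally show ?thesis by (simp add: power2_eq_square)
      qed
      hence "mat_vec (L^2) (khatri_rao n (conj_mat G) G) r i
           = mat_vec (L^2) (khatri_rao n (conj_mat G) G) rw i"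
        using req eq1 unfolding n_def by simp
      hence "(\<Sum>l<L^2. G p l * r l * cnj (G q l)) = (\<Sum>l<L^2. G p l * rw l * cnj (G q l))"
        unfolding KR imod idiv .
      hence "(\<Sum>l<L^2. e l * G p l * cnj (G q l)) = 0"
        unfolding e_def by (simp add: algebra_simps sum_subtractf)
      moreover have "(\<Sum>l<L^2. e l * G p l * cnj (G q l)) = (\<Sum>l\<in>S. e l * G p l * cnj (G q l))"
        by (rule sum.mono_neutral_right) (use SL in \<open>auto simp: S_def\<close>)
      ultimately show "(\<Sum>l\<in>S. e l * G p l * cnj (G q l)) = 0" by simp
    qed
    have "\<forall>k\<in>S. e k = 0"
      using key[of "L^2" N G n S e, OF spk SL cS eqS] by blast
    hence "S = {}" unfolding S_def by blast
    thus ?thesis unfolding S_def e_def by (auto simp: fun_eq_iff)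
  qed
  show ?thesis using sp_rw rw0 eq1 uniq by blast
qed

end
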